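(* Let $n,f,\ell,p$ be positive integers with $f$ even, $n=pf$ and $\ell+3\le f/2$. Let $\mathcal{C}_1\subseteq\{0,1\}^{f/2}$ be the set of binary sequences $\mathbf{a}=(a_1,\dots,a_{f/2})$ that begin with $0^\ell1$, end with $1$, and such that $(a_{\ell+1},\dots,a_{f/2})$ does not contain $0^\ell$ as a substring. Let $\mathcal{C}_2\subseteq\{0,1\}^{f/2}$ be the set of binary sequences of length $f/2$ that end with $1$, contain $01^\ell0$ as a substring, and do not contain $0^\ell$ as a substring. Let $\mathcal{C}=\{\mathbf{a}_1\mathbf{a}_2\cdots\mathbf{a}_{2p}:\mathbf{a}_1\in\mathcal{C}_1,\ \mathbf{a}_2,\dots,\mathbf{a}_{2p}\in\mathcal{C}_2\}\subseteq\{0,1\}^n$ (concatenation). Then $\mathcal{C}$ is an MU code and $\mathcal{C}$ is an $f$-APD code.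
   Context: $0^\ell$ denotes $\ell$ zeros, $1^\ell$ denotes $\ell$ ones; a substring is a block of consecutive entries. For $\mathbf{a}=(a_1,\dots,a_n)$ write $\mathbf{a}_i^j=(a_i,\dots,a_j)$ if $i\le j$ and $(a_i,a_{i-1},\dots,a_j)$ if $i>j$; $\bar{\mathbf{a}}$ is the bitwise complement. A code $\mathcal{C}\subseteq\{0,1\}^n$ is MU (mutually uncorrelated) if for all not necessarily distinct $\mathbf{a},\mathbf{b}\in\mathcal{C}$ and all $1\le l<n$, $\mathbf{a}_1^l\ne\mathbf{b}_{n-l+1}^n$. It is $f$-APD if for all not necessarily distinct $\mathbf{a},\mathbf{b}\in\mathcal{C}$ and all $1\le i,j\le n+1-f$, $\bar{\mathbf{a}}_i^{f+i-1}\ne\mathbf{b}_j^{f+j-1}$ and $\bar{\mathbf{a}}_i^{f+i-1}\ne\mathbf{b}_{f+j-1}^{j}$. *)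

theory Defs
  imports Main "HOL-Library.Sublist"
begin

text \<open>Binary sequences are modelled as bool lists: False = 0, True = 1.
  Entry a_i (1-indexed in the paper) is a ! (i - 1). "Substring" = contiguous
  sublist (HOL-Library.Sublist.sublist).\<close>

definition bcompl :: "bool list \<Rightarrow> bool list" where
  "bcompl a = map Not a"

text \<open>a_i^{i+f-1} (1-indexed i) is the window of length f starting at position i.\<close>
definition window :: "bool list \<Rightarrow> nat \<Rightarrow> nat \<Rightarrow> bool list" where
  "window a i f = take f (drop (i - 1) a)"

definition MU_code :: "nat \<Rightarrow> bool list set \<Rightarrow> bool" where
  "MU_code n C \<longleftrightarrow> (\<forall>a \<in> C. length a = n) \<and>
     (\<forall>a \<in> C. \<forall>b \<in> C. \<forall>l. 1 \<le> l \<and> l < n \<longrightarrow> take l a \<noteq> drop (n - l) b)"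

definition APD_code :: "nat \<Rightarrow> nat \<Rightarrow> bool list set \<Rightarrow> bool" where
  "APD_code n f C \<longleftrightarrow> (\<forall>a \<in> C. length a = n) \<and>
     (\<forall>a \<in> C. \<forall>b \<in> C. \<forall>i j. 1 \<le> i \<and> i \<le> n + 1 - f \<and> 1 \<le> j \<and> j \<le> n + 1 - f \<longrightarrow>
        bcompl (window a i f) \<noteq> window b j f \<and>
        bcompl (window a i f) \<noteq> rev (window b j f))"

definition code1 :: "nat \<Rightarrow> nat \<Rightarrow> bool list set" where
  "code1 f l = {a. length a = f div 2 \<and> prefix (replicate l False @ [True]) a \<and>
     suffix [True] a \<and> \<not> sublist (replicate l False) (drop l a)}"

definition code2 :: "nat \<Rightarrow> nat \<Rightarrow> bool list set" where
  "code2 f l = {a. length a = f div 2 \<and> suffix [True] a \<and>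
     sublist ([False] @ replicate l True @ [False]) a \<and> \<not> sublist (replicate l False) a}"

definition codeC :: "nat \<Rightarrow> nat \<Rightarrow> nat \<Rightarrow> bool list set" where
  "codeC f l p = {concat (a1 # as) | a1 as. a1 \<in> code1 f l \<and> length as = 2 * p - 1 \<and>
     set as \<subseteq> code2 f l}"

end

theory Submission
  imports Defs
begin

lemma suffix_single: "suffix [x] xs \<longleftrightarrow> (xs \<noteq> [] \<and> last xs = x)"
proof
  assume "suffix [x] xs" then show "xs \<noteq> [] \<and> last xs = x" by (auto simp: suffix_def)
next
  assume a: "xs \<noteq> [] \<and> last xs = x"
  have "xs = butlast xs @ [last xs]" by (rule append_butlast_last_id[symmetric]) (use a in simp)
  then show "suffix [x] xs" using a unfolding suffix_def by blast
qed

lemma no0_append: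
  assumes "suffix [True] ys" "\<not> sublist (replicate l False) ys"
    "\<not> sublist (replicate l False) zs"
  shows "\<not> sublist (replicate l False) (ys @ zs)"
proof
  assume "sublist (replicate l False) (ys @ zs)"
  then obtain xs1 xs2 where h: "replicate l False = xs1 @ xs2" "suffix xs1 ys" "prefix xs2 zs"
  proof -
    have "sublist (replicate l False) ys \<or> sublist (replicate l False) zs \<or>
      (\<exists>xs1 xs2. replicate l False = xs1 @ xs2 \<and> suffix xs1 ys \<and> prefix xs2 zs)"
      using \<open>sublist (replicate l False) (ys @ zs)\<close> sublist_append by blast
    then show ?thesis using that assms(2,3) by blast
  qed
  show False
  proof (cases "xs1 = []")
    case True
    then show False using h assms(3) by auto
  next
    case False
    have "set (xs1 @ xs2) \<subseteq> {False}" unfolding h(1)[symmetric] by (simp add: set_replicate_conv_if)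
    hence "set xs1 \<subseteq> {False}" by simp
    hence "last xs1 = False" using False last_in_set by blast
    moreover obtain u where "ys = u @ xs1" using h(2) unfolding suffix_def by blast
    then have "last ys = last xs1" using False by simp
    ultimately show False using assms(1) by (simp add: suffix_single)
  qed
qed

lemma no0_concat:
  assumes "set as \<subseteq> code2 f l" "l > 0"
  shows "\<not> sublist (replicate l False) (concat as)"
  using assms
proof (induction as)
  case Nil
  then show ?case by simp
next
  case (Cons a as)
  then show ?case using no0_append[of a l "concat as"] by (auto simp: code2_def)
qed

lemma suffix_concat:
  assumes "\<forall>b \<in> set bs. suffix [True] b" "bs \<noteq> []"
  shows "suffix [True] (concat bs)"
  using assms
proof (induction bs)
  case Nil
  then show ?case by simp
next
  case (Cons b bs)
  show ?case
  proof (cases "bs = []")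
    case True
    then show ?thesis using Cons by simp
  next
    case False
    then have "suffix [True] (concat bs)" using Cons by simp
    then show ?thesis by (simp add: suffix_single)
  qed
qed

lemma occ:
  assumes "c = replicate l False @ w" "w \<noteq> []"
    "hd w = True" "\<not> sublist (replicate l False) w" "c = xs @ replicate l False @ ys" "l > 0"
  shows "xs = []"
proof (rule ccontr)
  assume ne: "xs \<noteq> []"
  show False
  proof (cases "length xs \<ge> l")
    case True
    have "replicate l False @ w = xs @ (replicate l False @ ys)" using assms by simp
    then have "w = drop l xs @ replicate l False @ ys" using True
      by (simp add: append_eq_append_conv_if)
    then show False using assms(4) by simp
  next
    case False
    have "c ! l = w ! 0" using assms(1) by (simp add: nth_append)
    also have "\<dots> = True" using assms(2,3) by (simp add: hd_conv_nth)
    finally have 1: "c ! l = True" .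
    have "c ! l = (replicate l False @ ys) ! (l - length xs)" using assms(5) False
      by (simp add: nth_append)
    also have "\<dots> = False" using ne False by (simp add: nth_append)
    finally show False using 1 by simp
  qed
qed

lemma concat_uniform:
  assumes "\<forall>x \<in> set bs. length x = m" "k < length bs"
  shows "concat bs = concat (take k bs) @ bs!k @ concat (drop (Suc k) bs) \<and>
         length (concat (take k bs)) = k*m"
  using assms
proof (induction bs arbitrary: k)
  case Nil
  then show ?case by simp
next
  case (Cons b bs)
  show ?case
  proof (cases k)
    case 0
    then show ?thesis by simp
  next
    case (Suc k')
    then show ?thesis using Cons.IH[of k'] Cons.prems by simp
  qed
qed

lemma window_sub:
  assumes "c = u @ v @ w" "length u \<ge> i0" "length u + length v \<le> i0 + f"
  shows "sublist v (take f (drop i0 c))"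
proof -
  have "drop i0 c = drop i0 u @ v @ w" using assms by simp
  moreover have "length (drop i0 u @ v) \<le> f" using assms by simp
  ultimately have "take f (drop i0 c) = drop i0 u @ v @ take (f - length (drop i0 u @ v)) w"
    by (metis append_assoc take_all take_append order_refl)
  then show ?thesis by simp
qed

lemma codeword:
  assumes "c \<in> codeC f l p" "l > 0" "p > 0"
  shows "\<exists>w. c = replicate l False @ w \<and> w \<noteq> [] \<and> hd w = True \<and>
            \<not> sublist (replicate l False) w"
    "suffix [True] c"
    "\<exists>bs. c = concat bs \<and> length bs = 2*p \<and> (\<forall>x\<in>set bs. length x = f div 2) \<and>
          (\<forall>k. 1 \<le> k \<and> k < 2*p \<longrightarrow> bs!k \<in> code2 f l)"
proof -
  obtain a1 as where c: "c = concat (a1 # as)" "a1 \<in> code1 f l" "length as = 2*p - 1"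
    "set as \<subseteq> code2 f l" using assms(1) unfolding codeC_def by blast
  from c(2) obtain r where a1: "a1 = replicate l False @ True # r"
    unfolding code1_def prefix_def by auto
  have s1: "suffix [True] a1" using c(2) by (simp add: code1_def)
  hence s2: "suffix [True] (True # r)" using a1 by (simp add: suffix_single)
  have n1: "\<not> sublist (replicate l False) (True # r)" using c(2) a1 by (simp add: code1_def)
  have n2: "\<not> sublist (replicate l False) (concat as)" using no0_concat c(4) assms(2) by blast
  show "\<exists>w. c = replicate l False @ w \<and> w \<noteq> [] \<and> hd w = True \<and>
            \<not> sublist (replicate l False) w"
    by (rule exI[of _ "(True # r) @ concat as"])
       (use c(1) a1 no0_append[OF s2 n1 n2] in simp)
  have "\<forall>b\<in>set (a1 # as). suffix [True] b" using s1 c(4) by (auto simp: code2_def)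
  then show "suffix [True] c" using suffix_concat c(1) by blast
  show "\<exists>bs. c = concat bs \<and> length bs = 2*p \<and> (\<forall>x\<in>set bs. length x = f div 2) \<and>
          (\<forall>k. 1 \<le> k \<and> k < 2*p \<longrightarrow> bs!k \<in> code2 f l)"
  proof (rule exI[of _ "a1 # as"], intro conjI allI impI)
    show "c = concat (a1 # as)" by (rule c(1))
    show "length (a1 # as) = 2 * p" using c(3) assms(3) by simp
    show "\<forall>x\<in>set (a1 # as). length x = f div 2" using c(2,4) by (auto simp: code1_def code2_def)
  next
    fix k assume "1 \<le> k \<and> k < 2 * p"
    then show "(a1 # as) ! k \<in> code2 f l" using c(3,4)
      by (cases k) (auto simp: subset_iff)
  qed
qed


lemma sum_len_uniform: "\<forall>x\<in>set bs. length x = m \<Longrightarrow> sum_list (map length bs) = length bs * m"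
  by (induction bs) auto

lemma codeword_length:
  assumes "c \<in> codeC f l p" "l > 0" "p > 0" "even f"
  shows "length c = p * f"
proof -
  obtain bs where "c = concat bs" "length bs = 2*p" "\<forall>x\<in>set bs. length x = f div 2"
    using codeword(3)[OF assms(1-3)] by blast
  then have "length c = 2*p * (f div 2)"
    using sum_len_uniform[of bs "f div 2"] by (simp add: length_concat)
  then show ?thesis using assms(4) by simp
qed

theorem lemma5:
  fixes n f l p :: nat
  assumes "n > 0" "f > 0" "l > 0" "p > 0" "even f" "n = p * f" "l + 3 \<le> f div 2"
  shows "MU_code n (codeC f l p) \<and> APD_code n f (codeC f l p)"
proof
  have len: "\<forall>a \<in> codeC f l p. length a = n" using codeword_length[OF _ assms(3,4,5)] assms(6) by blast
  have nob: "\<not> sublist ([True] @ replicate l False @ [True]) b" if b: "b \<in> codeC f l p" for b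
  proof
    assume "sublist ([True] @ replicate l False @ [True]) b"
    then obtain xs ys where "b = xs @ ([True] @ replicate l False @ [True]) @ ys"
      unfolding sublist_def by blast
    then have e: "b = (xs @ [True]) @ replicate l False @ ([True] @ ys)" by simp
    obtain w where "b = replicate l False @ w" "w \<noteq> []" "hd w = True"
        "\<not> sublist (replicate l False) w" using codeword(1)[OF b assms(3,4)] by blast
    from occ[OF this e assms(3)] show False by simp
  qed
  show "MU_code n (codeC f l p)"
    unfolding MU_code_def
  proof (intro conjI ballI allI impI)
    fix a assume "a \<in> codeC f l p" then show "length a = n" using len by blast
  next
    fix a b l' assume a: "a \<in> codeC f l p" and b: "b \<in> codeC f l p" and l': "1 \<le> l' \<and> l' < n"
    show "take l' a \<noteq> drop (n - l') b"
    proof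
      assume eq: "take l' a = drop (n - l') b"
      obtain wa where wa: "a = replicate l False @ wa" using codeword(1)[OF a assms(3,4)] by blast
      obtain wb where wb: "b = replicate l False @ wb" "wb \<noteq> []" "hd wb = True"
        "\<not> sublist (replicate l False) wb" using codeword(1)[OF b assms(3,4)] by blast
      have lb: "length b = n" using len b by blast
      show False
      proof (cases "l' \<le> l")
        case True
        have t1: "take l' a = replicate l' False" using wa True by (simp add: min_def)
        have t2: "last (drop (n - l') b) = True"
          using codeword(2)[OF b assms(3,4)] lb l' by (simp add: suffix_single)
        have t3: "l' \<noteq> 0" using l' by simp
        have "drop (n - l') b = replicate l' False" using t1 eq by simp
        then have "last (drop (n - l') b) = False" using t3 by simp
        then show False using t2 by simp
      next
        case False
        have "take l' a = replicate l False @ take (l' - l) wa" using wa False by simp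
        then have d: "drop (n - l') b = replicate l False @ take (l' - l) wa" using eq by simp
        have "b = take (n - l') b @ drop (n - l') b" by (rule append_take_drop_id[symmetric])
        then have "b = take (n - l') b @ replicate l False @ take (l' - l) wa"
          by (simp only: d)
        from occ[OF wb this assms(3)] have "take (n - l') b = []" .
        then show False using lb l' by simp
      qed
    qed
  qed
  show "APD_code n f (codeC f l p)"
    unfolding APD_code_def
  proof (intro conjI ballI allI impI)
    fix a assume "a \<in> codeC f l p" then show "length a = n" using len by blast
  next
    fix a b i j assume a: "a \<in> codeC f l p" and b: "b \<in> codeC f l p"
      and ij: "1 \<le> i \<and> i \<le> n + 1 - f \<and> 1 \<le> j \<and> j \<le> n + 1 - f"
    define m where "m = f div 2"
    have f2: "f = 2 * m" using assms(5) m_def by simp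
    have mpos: "m > 0" using assms(7) m_def by simp
    obtain bs where bs: "a = concat bs" "length bs = 2*p" "\<forall>x\<in>set bs. length x = m"
      "\<forall>k. 1 \<le> k \<and> k < 2*p \<longrightarrow> bs!k \<in> code2 f l"
      using codeword(3)[OF a assms(3,4)] unfolding m_def[symmetric] by blast
    define i0 where "i0 = i - 1"
    define k where "k = i0 div m + 1"
    have fn: "f \<le> n" using assms(4,6) by simp
    have i0le': "i0 + f \<le> n" using ij fn i0_def by linarith
    have i0le: "i0 + 2 * m \<le> 2 * p * m" using i0le' assms(6) f2 by (simp add: algebra_simps)
    have d2: "i0 mod m < m" by (rule mod_less_divisor[OF mpos])
    have d3: "i0 div m * m + i0 mod m = i0" by (rule div_mult_mod_eq)
    have d4: "k * m = i0 div m * m + m" unfolding k_def by simp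
    have "i0 < k * m" using d2 d3 d4 by linarith
    have km: "k * m \<le> i0 + m" using d3 d4 by linarith
    have "k * m + m \<le> 2 * p * m" using km i0le by linarith
    then have "(k + 1) * m \<le> (2 * p) * m" by (simp add: algebra_simps)
    then have "k + 1 \<le> 2 * p" by (rule mult_right_le_imp_le[OF _ mpos])
    then have kl: "k < 2 * p" "1 \<le> k" using k_def by auto
    have dec: "a = concat (take k bs) @ bs!k @ concat (drop (Suc k) bs)"
      "length (concat (take k bs)) = k * m"
      using concat_uniform[OF bs(3), of k] bs(1,2) kl by simp_all
    have bk: "bs ! k \<in> code2 f l" using bs(4) kl(1,2) by simp
    have lbk: "length (bs ! k) = m" using bs(2,3) kl(1) nth_mem by simp
    have "sublist (bs ! k) (window a i f)"
      unfolding window_def i0_def[symmetric]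
      by (rule window_sub[OF dec(1)]) (use dec(2) lbk \<open>i0 < k * m\<close> km f2 in linarith)+
    moreover have "sublist ([False] @ replicate l True @ [False]) (bs ! k)"
      using bk by (simp add: code2_def)
    ultimately have "sublist ([False] @ replicate l True @ [False]) (window a i f)"
      by (rule sublist_order.order.trans[rotated])
    from map_mono_sublist[OF this, of Not]
    have pat: "sublist ([True] @ replicate l False @ [True]) (bcompl (window a i f))"
      by (simp add: bcompl_def)
    have wb: "sublist (window b j f) b" unfolding window_def
      by (rule sublist_order.order.trans[OF sublist_take sublist_drop])
    show "bcompl (window a i f) \<noteq> window b j f"
    proof
      assume "bcompl (window a i f) = window b j f"
      then have "sublist ([True] @ replicate l False @ [True]) b"
        using sublist_order.order.trans[OF pat] wb by simp
      then show False using nob[OF b] by simp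
    qed
    show "bcompl (window a i f) \<noteq> rev (window b j f)"
    proof
      assume "bcompl (window a i f) = rev (window b j f)"
      then have "sublist ([True] @ replicate l False @ [True]) (rev (window b j f))"
        using pat by simp
      then have "sublist ([True] @ replicate l False @ [True]) (window b j f)"
        by (simp add: sublist_rev_right)
      then have "sublist ([True] @ replicate l False @ [True]) b"
        using sublist_order.order.trans wb by simp
      then show False using nob[OF b] by simp
    qed
  qed
qed

end
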